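(* For every integer $n\geq -2$, the polynomial $e_1^{n}\,\tilde e_1^{\,n}\in\mathbb{Z}\langle X\rangle$ is a polynomial with Jordan property.
   Context: Rings are associative with $1$; homomorphisms preserve $1$. A Jordan homomorphism $\alpha:R\to R'$ is a map with $(a+b)^\alpha=a^\alpha+b^\alpha$, $1^\alpha=1'$, $(aba)^\alpha=a^\alpha b^\alpha a^\alpha$ for all $a,b\in R$. Let $\mathbb{Z}\langle X\rangle$ be the free $\mathbb{Z}$-algebra on non-commuting indeterminates $x_1,x_2,\ldots$. For a finite or infinite sequence $T=(t_1,t_2,\ldots)$ in a ring $R$, $f(T)$ denotes the image of $f\in\mathbb{Z}\langle X\rangle$ under the homomorphism $x_i\mapsto t_i$ (finite sequences are padded with zeros). A polynomial $f$ has the Jordan property if $f(T)^\alpha=f(T^\alpha)$ for every Jordan homomorphism $\alpha:R\to R'$ between arbitrary rings and every finite or infinite sequence $T$ in $R$, where $T^\alpha=(t_1^\alpha,t_2^\alpha,\ldots)$. Define $e^{(-2)}:=-1$, $e^{(-1)}:=0$, $e^{(0)}:=1$, $e^{(n)}:=e^{(n-1)}x_n-e^{(n-2)}$ for $n\geq1$. Put $e_1^{m}:=e^{(m)}$ for $m\geq-2$, and $\tilde e_1^{\,m}:=e^{(m)}(x_m,x_{m-1},\ldots,x_1)$ (substituting $x_i\mapsto x_{m+1-i}$ for $i\leq m$) for $m\geq1$, $\tilde e_1^{\,m}:=e^{(m)}$ for $-2\leq m\leq 0$. *)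

theory Defs
  imports Main
begin

text \<open>Elements of the free algebra Z<X> over non-commuting indeterminates x_1, x_2, ...,
  represented by polynomial expressions; they are only ever used through evaluation
  (the homomorphism x_i to t_i), which is well defined on Z<X>.\<close>
datatype ncpoly = PVar nat | PConst int | PAdd ncpoly ncpoly | PMul ncpoly ncpoly | PNeg ncpoly

text \<open>f(T): image of f under the ring homomorphism Z<X> to R, x_i to T i (i >= 1).
  A finite sequence is modelled by padding with zeros.\<close>
primrec peval :: "ncpoly \<Rightarrow> (nat \<Rightarrow> 'a::ring_1) \<Rightarrow> 'a" where
  "peval (PVar i) T = T i"
| "peval (PConst c) T = of_int c"
| "peval (PAdd p q) T = peval p T + peval q T"
| "peval (PMul p q) T = peval p T * peval q T"
| "peval (PNeg p) T = - peval p T"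

primrec psubst :: "(nat \<Rightarrow> ncpoly) \<Rightarrow> ncpoly \<Rightarrow> ncpoly" where
  "psubst s (PVar i) = s i"
| "psubst s (PConst c) = PConst c"
| "psubst s (PAdd p q) = PAdd (psubst s p) (psubst s q)"
| "psubst s (PMul p q) = PMul (psubst s p) (psubst s q)"
| "psubst s (PNeg p) = PNeg (psubst s p)"

function epoly :: "int \<Rightarrow> ncpoly" where
  "epoly n = (if n \<le> -2 then PConst (-1)
              else if n = -1 then PConst 0
              else if n = 0 then PConst 1
              else PAdd (PMul (epoly (n - 1)) (PVar (nat n))) (PNeg (epoly (n - 2))))"
  by auto
termination by (relation "measure (\<lambda>n. nat (n + 3))") auto

declare epoly.simps [simp del]

definition e1 :: "int \<Rightarrow> ncpoly" where
  "e1 m = epoly m"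

text \<open>tilde e_1^m = e^(m)(x_m, ..., x_1) for m >= 1, i.e. x_i to x_(m+1-i) for i <= m.\<close>
definition et1 :: "int \<Rightarrow> ncpoly" where
  "et1 m = (if m \<ge> 1
            then psubst (\<lambda>i. if 1 \<le> i \<and> i \<le> nat m then PVar (nat m + 1 - i) else PVar i) (epoly m)
            else epoly m)"

definition jordan_hom :: "('a::ring_1 \<Rightarrow> 'b::ring_1) \<Rightarrow> bool" where
  "jordan_hom \<alpha> \<longleftrightarrow> (\<forall>a b. \<alpha> (a + b) = \<alpha> a + \<alpha> b) \<and> \<alpha> 1 = 1
      \<and> (\<forall>a b. \<alpha> (a * b * a) = \<alpha> a * \<alpha> b * \<alpha> a)"

text \<open>The Jordan property of f is this condition for all rings R, R' (type variables, universally
  quantified at theorem level) and all Jordan homomorphisms alpha.\<close>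
definition jordan_prop_wrt :: "('a::ring_1 \<Rightarrow> 'b::ring_1) \<Rightarrow> ncpoly \<Rightarrow> bool" where
  "jordan_prop_wrt \<alpha> f \<longleftrightarrow> (\<forall>T :: nat \<Rightarrow> 'a. \<alpha> (peval f T) = peval f (\<alpha> \<circ> T))"

end

theory Submission
  imports Defs
begin

function Kz :: "(nat \<Rightarrow> 'a::ring_1) \<Rightarrow> nat \<Rightarrow> int \<Rightarrow> 'a" where
  "Kz T s m = (if m \<le> -2 then -1 else if m = -1 then 0 else if m = 0 then 1
     else Kz T s (m-1) * T (s + nat m) - Kz T s (m-2))"
  by auto
termination by (relation "measure (\<lambda>(T,s,m). nat (m+3))") auto

declare Kz.simps[simp del]

lemma Kz_low: "m \<le> -2 \<Longrightarrow> Kz T s m = -1" "Kz T s (-1) = 0" "Kz T s 0 = 1"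
  by (subst Kz.simps; simp)+

lemma Kz_step: "m \<ge> 1 \<Longrightarrow> Kz T s m = Kz T s (m-1) * T (s + nat m) - Kz T s (m-2)"
  by (subst Kz.simps) simp

lemma peval_epoly: "peval (epoly n) T = Kz T 0 n"
proof (induction n rule: epoly.induct)
  case (1 n)
  show ?case
  proof (cases "n \<ge> 1")
    case True
    have "epoly n = PAdd (PMul (epoly (n - 1)) (PVar (nat n))) (PNeg (epoly (n - 2)))"
      using True by (subst epoly.simps) simp
    then show ?thesis using 1 True by (simp add: Kz_step)
  next
    case False
    then have "n \<le> -2 \<or> n = -1 \<or> n = 0" by linarith
    then show ?thesis
      by (elim disjE; subst epoly.simps; simp add: Kz_low)
  qed
qed

lemma Kz_local:
  "(\<forall>i. 1 \<le> i \<and> int i \<le> m \<longrightarrow> T (s+i) = T' (s'+i)) \<Longrightarrow> Kz T s m = Kz T' s' m"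
proof (induction T s m rule: Kz.induct)
  case (1 T s m)
  show ?case
  proof (cases "m \<ge> 1")
    case True
    have a: "Kz T s (m-1) = Kz T' s' (m-1)" using 1 True by auto
    have b: "Kz T s (m-2) = Kz T' s' (m-2)" using 1 True by auto
    have c: "T (s + nat m) = T' (s' + nat m)" using 1(3)[rule_format, of "nat m"] True
      by simp
    show ?thesis using a b c True by (simp add: Kz_step)
  next
    case False
    then have "m \<le> -2 \<or> m = -1 \<or> m = 0" by linarith
    then show ?thesis by (auto simp: Kz_low)
  qed
qed

lemma Kz_left: "m \<ge> 1 \<Longrightarrow> Kz T s m = T (s+1) * Kz T (s+1) (m-1) - Kz T (s+2) (m-2)"
proof (induction T s m rule: Kz.induct)
  case (1 T s m)
  consider "m = 1" | "m = 2" | "m \<ge> 3" using 1(3) by linarith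
  then show ?case
  proof cases
    case 1
    then show ?thesis by (simp add: Kz_step Kz_low)
  next
    case 2
    then show ?thesis by (simp add: Kz_step Kz_low)
  next
    case 3
    have i1: "Kz T s (m-1) = T (s+1) * Kz T (s+1) (m-1-1) - Kz T (s+2) (m-1-2)"
      using 1(1) 3 by auto
    have i2: "Kz T s (m-2) = T (s+1) * Kz T (s+1) (m-2-1) - Kz T (s+2) (m-2-2)"
    proof (cases "m = 3")
      case True then show ?thesis by (simp add: Kz_step Kz_low)
    next
      case False then show ?thesis using 1(2) 3 by auto
    qed
    have h1: "s+1 + nat (m-1) = s + nat m" and h2: "s+2 + nat (m-2) = s + nat m" using 3 by auto
    have e1: "Kz T (s+1) (m-1) = Kz T (s+1) (m-1-1) * T (s + nat m) - Kz T (s+1) (m-1-2)"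
      using Kz_step[of "m-1" T "s+1"] 3 unfolding h1 by simp
    have e2: "Kz T (s+2) (m-2) = Kz T (s+2) (m-2-1) * T (s + nat m) - Kz T (s+2) (m-2-2)"
      using Kz_step[of "m-2" T "s+2"] 3 unfolding h2 by simp
    have e0: "Kz T s m = Kz T s (m-1) * T (s + nat m) - Kz T s (m-2)"
      using 3 by (simp add: Kz_step)
    have eq: "m-1-2 = m-2-1" by simp
    show ?thesis unfolding e0 e1 e2 i1 i2 eq by (simp add: algebra_simps)
  qed
qed

lemma peval_psubst: "peval (psubst s p) T = peval p (\<lambda>i. peval (s i) T)"
  by (induction p) auto

lemma peval_et1: "n \<ge> -2 \<Longrightarrow> peval (et1 n) T = Kz (\<lambda>i. T (nat n + 1 - i)) 0 n"
proof (cases "n \<ge> 1")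
  case True
  then show ?thesis
    unfolding et1_def using True
    by (auto simp: peval_psubst peval_epoly intro!: Kz_local)
next
  case False
  then show ?thesis unfolding et1_def using False
    by (auto simp: peval_epoly intro!: Kz_local)
qed

lemma q_step: "k \<ge> 1 \<Longrightarrow> Kz (\<lambda>i. T (nat k + 1 - i)) 0 k =
   T (nat k) * Kz (\<lambda>i. T (nat (k-1) + 1 - i)) 0 (k-1) - Kz (\<lambda>i. T (nat (k-2) + 1 - i)) 0 (k-2)"
proof -
  assume k: "k \<ge> 1"
  have a: "Kz (\<lambda>i. T (nat k + 1 - i)) (0+1) (k-1) = Kz (\<lambda>i. T (nat (k-1) + 1 - i)) 0 (k-1)"
    by (rule Kz_local) (use k in \<open>auto intro!: arg_cong[where f=T]\<close>)
  have b: "Kz (\<lambda>i. T (nat k + 1 - i)) (0+2) (k-2) = Kz (\<lambda>i. T (nat (k-2) + 1 - i)) 0 (k-2)"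
    by (rule Kz_local) (use k in \<open>auto intro!: arg_cong[where f=T]\<close>)
  show ?thesis using Kz_left[OF k, of "\<lambda>i. T (nat k + 1 - i)" 0] unfolding a b using k by simp
qed

definition Rv :: "(nat \<Rightarrow> 'c) \<Rightarrow> int \<Rightarrow> nat \<Rightarrow> 'c" where
  "Rv T k = (\<lambda>i. T (nat k + 1 - i))"

lemma jh_add: "jordan_hom \<alpha> \<Longrightarrow> \<alpha> (a + b) = \<alpha> a + \<alpha> b"
  by (simp add: jordan_hom_def)

lemma jh_zero: "jordan_hom \<alpha> \<Longrightarrow> \<alpha> 0 = 0"
  using jh_add[of \<alpha> 0 0] by simp

lemma jh_neg: "jordan_hom \<alpha> \<Longrightarrow> \<alpha> (- a) = - \<alpha> a"
  using jh_add[of \<alpha> a "-a"] jh_zero[of \<alpha>] by (metis neg_eq_iff_add_eq_0 add.right_inverse)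

lemma jh_diff: "jordan_hom \<alpha> \<Longrightarrow> \<alpha> (a - b) = \<alpha> a - \<alpha> b"
  using jh_add[of \<alpha> a "-b"] jh_neg[of \<alpha> b] by simp

lemma jh_one: "jordan_hom \<alpha> \<Longrightarrow> \<alpha> 1 = 1"
  by (simp add: jordan_hom_def)

lemma jh_sq: "jordan_hom \<alpha> \<Longrightarrow> \<alpha> (a * b * a) = \<alpha> a * \<alpha> b * \<alpha> a"
  by (simp add: jordan_hom_def)

lemma jh_triple:
  assumes J: "jordan_hom \<alpha>"
  shows "\<alpha> (u*v*w + w*v*u) = \<alpha> u*\<alpha> v*\<alpha> w + \<alpha> w*\<alpha> v*\<alpha> u"
proof -
  have "(u+w)*v*(u+w) = u*v*u + (u*v*w + w*v*u) + w*v*w" by (simp add: algebra_simps)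
  then have "\<alpha> ((u+w)*v*(u+w)) = \<alpha> (u*v*u) + \<alpha> (u*v*w + w*v*u) + \<alpha> (w*v*w)"
    using J by (simp add: jh_add)
  moreover have "\<alpha> ((u+w)*v*(u+w)) = (\<alpha> u + \<alpha> w)*\<alpha> v*(\<alpha> u + \<alpha> w)"
    using J by (simp add: jh_sq jh_add)
  moreover have "(\<alpha> u + \<alpha> w)*\<alpha> v*(\<alpha> u + \<alpha> w) = \<alpha> u*\<alpha> v*\<alpha> u + (\<alpha> u*\<alpha> v*\<alpha> w + \<alpha> w*\<alpha> v*\<alpha> u) + \<alpha> w*\<alpha> v*\<alpha> w"
    by (simp add: algebra_simps)
  ultimately show ?thesis using J by (simp add: jh_sq)
qed

lemma main_abstract:
  fixes \<alpha> :: "'a::ring_1 \<Rightarrow> 'b::ring_1"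
  assumes J: "jordan_hom \<alpha>"
    and p0: "p (-1) = 0" "p 0 = 1" and q0: "q (-1) = 0" "q 0 = 1"
    and P0: "P (-1) = 0" "P 0 = 1" and Q0: "Q (-1) = 0" "Q 0 = 1"
    and pr: "\<And>k. k \<ge> 1 \<Longrightarrow> p k = p (k-1) * x k - p (k-2)"
    and qr: "\<And>k. k \<ge> 1 \<Longrightarrow> q k = x k * q (k-1) - q (k-2)"
    and Pr: "\<And>k. k \<ge> 1 \<Longrightarrow> P k = P (k-1) * \<alpha> (x k) - P (k-2)"
    and Qr: "\<And>k. k \<ge> 1 \<Longrightarrow> Q k = \<alpha> (x k) * Q (k-1) - Q (k-2)"
  shows "\<alpha> (p (int j) * y * q (int j)) = P (int j) * \<alpha> y * Q (int j)"
proof -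
  define S where "S k \<longleftrightarrow> (\<forall>y. \<alpha> (p k * y * q k) = P k * \<alpha> y * Q k)" for k
  define Tt where "Tt k \<longleftrightarrow> (\<forall>a b. \<alpha> (p k*(a*b)*q(k-1) + p(k-1)*(b*a)*q k)
      = P k*(\<alpha> a*\<alpha> b)*Q(k-1) + P(k-1)*(\<alpha> b*\<alpha> a)*Q k)" for k
  have "S (int j - 1) \<and> S (int j) \<and> Tt (int j)"
  proof (induction j)
    case 0
    show ?case using p0 q0 P0 Q0 J by (simp add: S_def Tt_def jh_zero)
  next
    case (Suc j)
    define k where "k = int j + 1"
    have k1: "k \<ge> 1" by (simp add: k_def)
    have km: "k - 1 = int j" "k - 1 - 1 = int j - 1" "int (Suc j) = k" "int (Suc j) - 1 = int j"
      by (auto simp: k_def)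
    have Sm: "S (k-2)" and S1: "S (k-1)" and T1: "Tt (k-1)"
      using Suc by (auto simp: km[symmetric] simp del: of_nat_Suc)
    define xk where "xk = x k"
    have Sk: "S k"
      unfolding S_def
    proof
      fix y
      have e: "p k * y * q k = p(k-1)*(xk*y*xk)*q(k-1) + p(k-2)*y*q(k-2)
          - (p(k-1)*(xk*y)*q(k-1-1) + p(k-1-1)*(y*xk)*q(k-1))"
        unfolding pr[OF k1] qr[OF k1] xk_def by (simp add: algebra_simps)
      have e': "P k * \<alpha> y * Q k = P(k-1)*(\<alpha> xk*\<alpha> y*\<alpha> xk)*Q(k-1) + P(k-2)*\<alpha> y*Q(k-2)
          - (P(k-1)*(\<alpha> xk*\<alpha> y)*Q(k-1-1) + P(k-1-1)*(\<alpha> y*\<alpha> xk)*Q(k-1))"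
        unfolding Pr[OF k1] Qr[OF k1] xk_def by (simp add: algebra_simps)
      show "\<alpha> (p k * y * q k) = P k * \<alpha> y * Q k"
        unfolding e e' using J Sm S1 T1
        by (simp add: jh_diff jh_add jh_sq S_def Tt_def)
    qed
    have Tk: "Tt k"
      unfolding Tt_def
    proof (intro allI)
      fix a b
      have e: "p k*(a*b)*q(k-1) + p(k-1)*(b*a)*q k = p(k-1)*(xk*a*b + b*a*xk)*q(k-1)
          - (p (k-1)*(b*a)*q(k-1-1) + p(k-1-1)*(a*b)*q (k-1))"
        unfolding pr[OF k1] qr[OF k1] xk_def by (simp add: algebra_simps)
      have e': "P k*(\<alpha> a*\<alpha> b)*Q(k-1) + P(k-1)*(\<alpha> b*\<alpha> a)*Q k
          = P(k-1)*(\<alpha> xk*\<alpha> a*\<alpha> b + \<alpha> b*\<alpha> a*\<alpha> xk)*Q(k-1)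
          - (P (k-1)*(\<alpha> b*\<alpha> a)*Q(k-1-1) + P(k-1-1)*(\<alpha> a*\<alpha> b)*Q (k-1))"
        unfolding Pr[OF k1] Qr[OF k1] xk_def by (simp add: algebra_simps)
      show "\<alpha> (p k*(a*b)*q(k-1) + p(k-1)*(b*a)*q k) = P k*(\<alpha> a*\<alpha> b)*Q(k-1) + P(k-1)*(\<alpha> b*\<alpha> a)*Q k"
        unfolding e e' using J S1 T1
        by (simp add: jh_diff jh_triple S_def Tt_def)
    qed
    have "S (int j)" using S1 km(1) by simp
    moreover have "int (Suc j) = k" "int (Suc j) - 1 = int j" by (auto simp: k_def)
    ultimately show ?case using Sk Tk by metis
  qed
  then show ?thesis by (simp add: S_def)
qed

lemma ev_lemma: "n \<ge> -2 \<Longrightarrow> peval (PMul (e1 n) (et1 n)) T' = Kz T' 0 n * Kz (Rv T' n) 0 n"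
  by (simp add: e1_def peval_epoly peval_et1 Rv_def)

theorem proposition3p4:
  fixes n :: int and \<alpha> :: "'a::ring_1 \<Rightarrow> 'b::ring_1"
  assumes "n \<ge> -2" and "jordan_hom \<alpha>"
  shows "jordan_prop_wrt \<alpha> (PMul (e1 n) (et1 n))"
  unfolding jordan_prop_wrt_def
proof
  fix T :: "nat \<Rightarrow> 'a"
  note ev = ev_lemma[OF assms(1)]
  show "\<alpha> (peval (PMul (e1 n) (et1 n)) T) = peval (PMul (e1 n) (et1 n)) (\<alpha> \<circ> T)"
  proof (cases "n = -2")
    case True
    then show ?thesis unfolding ev using assms(2) by (simp add: Kz_low jh_one)
  next
    case False
    show ?thesis
    proof (cases "n = -1")
      case True
      then show ?thesis unfolding ev using assms(2) by (simp add: Kz_low jh_zero)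
    next
      case False
      define j where "j = nat n"
      have j: "n = int j" using assms(1) \<open>n \<noteq> -2\<close> False unfolding j_def by simp
      have m: "\<alpha> (Kz T 0 (int j) * 1 * Kz (Rv T (int j)) 0 (int j))
         = Kz (\<alpha> \<circ> T) 0 (int j) * \<alpha> 1 * Kz (Rv (\<alpha> \<circ> T) (int j)) 0 (int j)"
      proof (rule main_abstract[where x = "\<lambda>k. T (nat k)"])
        show "jordan_hom \<alpha>" by (rule assms(2))
      next
        fix k :: int assume "k \<ge> 1"
        then show "Kz T 0 k = Kz T 0 (k - 1) * T (nat k) - Kz T 0 (k - 2)"
          "Kz (\<alpha> \<circ> T) 0 k = Kz (\<alpha> \<circ> T) 0 (k - 1) * \<alpha> (T (nat k)) - Kz (\<alpha> \<circ> T) 0 (k - 2)"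
          by (simp_all add: Kz_step)
      next
        fix k :: int assume "k \<ge> 1"
        then show "Kz (Rv T k) 0 k = T (nat k) * Kz (Rv T (k-1)) 0 (k - 1) - Kz (Rv T (k-2)) 0 (k - 2)"
          "Kz (Rv (\<alpha> \<circ> T) k) 0 k = \<alpha> (T (nat k)) * Kz (Rv (\<alpha> \<circ> T) (k-1)) 0 (k - 1) - Kz (Rv (\<alpha> \<circ> T) (k-2)) 0 (k - 2)"
          unfolding Rv_def using q_step[of k] by simp_all
      qed (simp_all add: Kz_low)
      then show ?thesis unfolding ev unfolding j using assms(2) by (simp add: jh_one)
    qed
  qed
qed

end
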